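(* Let $A$ be a countable subset of $\mathbb{R}^d$. Then there exists a lattice $D$ in $\mathbb{R}^d$ such that $D\cap\mathrm{span}_{\mathbb{Q}}(A)=\{0\}$ and $D^\circ\cap\mathrm{span}_{\mathbb{Q}}(A)=\{0\}$, where $D^\circ=\{x\in\mathbb{R}^d:\langle y,x\rangle\in\mathbb{Z}\text{ for all }y\in D\}$ is the dual lattice.
   Context: A lattice in $\mathbb{R}^d$ is a discrete cocompact subgroup. $\mathrm{span}_{\mathbb{Q}}(A)$ is the set of finite rational linear combinations of elements of $A$. *)

theory Defs
  imports "HOL-Analysis.Analysis"
begin

definition is_lattice :: "'a::euclidean_space set \<Rightarrow> bool" where
  "is_lattice D \<longleftrightarrow>
     0 \<in> D \<and> (\<forall>x\<in>D. \<forall>y\<in>D. x - y \<in> D) \<and>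
     (\<forall>x\<in>D. \<exists>e>0. \<forall>y\<in>D. dist y x < e \<longrightarrow> y = x) \<and>
     (\<exists>K. compact K \<and> (\<forall>x. \<exists>v\<in>D. \<exists>k\<in>K. x = v + k))"

definition span_Q :: "'a::euclidean_space set \<Rightarrow> 'a set" where
  "span_Q A = {x. \<exists>S c. finite S \<and> S \<subseteq> A \<and> (\<forall>a\<in>S. c a \<in> \<rat>) \<and>
                      x = (\<Sum>a\<in>S. c a *\<^sub>R a)}"

definition dual_lattice :: "'a::euclidean_space set \<Rightarrow> 'a set" where
  "dual_lattice D = {x. \<forall>y\<in>D. y \<bullet> x \<in> \<int>}"

end

theory Submission
  imports Defs
begin


definition Zs :: "'a::euclidean_space set" where "Zs = {x. \<forall>i\<in>Basis. x \<bullet> i \<in> \<int>}"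
definition Lt :: "real \<Rightarrow> 'a::euclidean_space set" where "Lt t = {x. \<forall>i\<in>Basis. x \<bullet> i / t \<in> \<int>}"

lemma sumB_inner:
  fixes f :: "'a::euclidean_space \<Rightarrow> real"
  assumes "j \<in> Basis"
  shows "(\<Sum>i\<in>Basis. f i *\<^sub>R i) \<bullet> j = f j"
  using assms by (simp add: inner_sum_left inner_Basis if_distrib sum.delta cong: if_cong)

lemma countable_Zs: "countable (Zs :: 'a::euclidean_space set)"
proof -
  let ?h = "\<lambda>f. \<Sum>i\<in>(Basis::'a set). f i *\<^sub>R i"
  have "Zs \<subseteq> ?h ` (Pi\<^sub>E (Basis::'a set) (\<lambda>_. \<int>))"
  proof
    fix x :: 'a assume x: "x \<in> Zs"
    have "?h (restrict (\<lambda>i. x \<bullet> i) Basis) = (\<Sum>i\<in>Basis. (x \<bullet> i) *\<^sub>R i)"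
      by (intro sum.cong) auto
    also have "\<dots> = x" by (rule euclidean_representation)
    finally have e: "x = ?h (restrict (\<lambda>i. x \<bullet> i) Basis)" by simp
    have "restrict (\<lambda>i. x \<bullet> i) Basis \<in> Pi\<^sub>E Basis (\<lambda>_. \<int>)"
      using x by (auto simp: Zs_def)
    with e show "x \<in> ?h ` (Pi\<^sub>E (Basis::'a set) (\<lambda>_. \<int>))"
      by (rule rev_image_eqI[rotated])
  qed
  moreover have "countable (\<int> :: real set)" unfolding Ints_def by simp
  hence "countable (Pi\<^sub>E (Basis::'a set) (\<lambda>_. \<int>::real set))"
    by (intro countable_PiE) auto
  ultimately show ?thesis
    using countable_image countable_subset by blast
qed

lemma countable_spanQ:
  assumes "countable A"
  shows "countable (span_Q A)"
proof -
  let ?g = "\<lambda>xs. sum_list (map (\<lambda>(q,a). of_rat q *\<^sub>R a) xs)"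
  have "span_Q A \<subseteq> ?g ` lists (UNIV \<times> A)"
  proof
    fix x assume "x \<in> span_Q A"
    then obtain S c where S: "finite S" "S \<subseteq> A" "\<forall>a\<in>S. c a \<in> \<rat>"
      and x: "x = (\<Sum>a\<in>S. c a *\<^sub>R a)" unfolding span_Q_def by blast
    obtain xs where xs: "set xs = S" "distinct xs" using S(1) finite_distinct_list by blast
    define q where "q a = (SOME r. c a = of_rat r)" for a
    have q: "of_rat (q a) = c a" if "a \<in> S" for a
      using S(3) that unfolding q_def Rats_def by (metis (mono_tags) someI_ex rangeE)
    let ?ys = "map (\<lambda>a. (q a, a)) xs"
    have "?ys \<in> lists (UNIV \<times> A)" using xs S(2) by auto
    moreover have "?g ?ys = x"
    proof -
      have "?g ?ys = sum_list (map (\<lambda>a. of_rat (q a) *\<^sub>R a) xs)"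
        by (simp add: comp_def)
      also have "\<dots> = (\<Sum>a\<in>S. of_rat (q a) *\<^sub>R a)"
        using xs by (simp add: sum_list_distinct_conv_sum_set)
      also have "\<dots> = x" using q x by simp
      finally show ?thesis .
    qed
    ultimately show "x \<in> ?g ` lists (UNIV \<times> A)" by blast
  qed
  moreover have "countable (lists (UNIV \<times> A) :: (rat \<times> 'a) list set)"
    using assms by simp
  ultimately show ?thesis by (meson countable_image countable_subset)
qed

lemma zero_spanQ: "0 \<in> span_Q A"
  unfolding span_Q_def by (rule CollectI, rule exI[of _ "{}"]) simp

lemma absge:
  fixes a t :: real
  assumes t: "t > 0" and i: "a \<noteq> 0" and zi: "a / t \<in> \<int>"
  shows "\<bar>a\<bar> \<ge> t"
proof -
      have nz: "a / t \<noteq> 0" using i t by simp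
      have h: "\<bar>a / t\<bar> \<ge> 1" using Ints_nonzero_abs_ge1[OF zi nz] .
      have "\<bar>a\<bar> = \<bar>a / t\<bar> * t" using t by simp
      moreover have "\<bar>a / t\<bar> * t \<ge> 1 * t" using h t by (intro mult_right_mono) auto
      ultimately show "\<bar>a\<bar> \<ge> t" by simp
qed

lemma Lt_lattice:
  assumes t: "t > 0"
  shows "is_lattice (Lt t :: 'a::euclidean_space set)"
  unfolding is_lattice_def
proof (intro conjI)
  show "0 \<in> (Lt t :: 'a set)" by (simp add: Lt_def)
  show "\<forall>x\<in>(Lt t :: 'a set). \<forall>y\<in>Lt t. x - y \<in> Lt t"
    by (auto simp: Lt_def inner_diff_left diff_divide_distrib intro!: Ints_diff)
  show "\<forall>x\<in>(Lt t :: 'a set). \<exists>e>0. \<forall>y\<in>Lt t. dist y x < e \<longrightarrow> y = x"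
  proof (intro ballI exI[of _ t] conjI impI allI)
    fix x y :: 'a assume x: "x \<in> Lt t" and y: "y \<in> Lt t" and d: "dist y x < t"
    show "y = x"
    proof (rule ccontr)
      assume "y \<noteq> x"
      hence "y - x \<noteq> 0" by simp
      then obtain i where i: "i \<in> Basis" "(y - x) \<bullet> i \<noteq> 0"
        using euclidean_all_zero_iff by blast
      have zi: "(y - x) \<bullet> i / t \<in> \<int>" using x y i(1)
        by (auto simp: Lt_def inner_diff_left diff_divide_distrib intro!: Ints_diff)
      have "\<bar>(y - x) \<bullet> i\<bar> \<ge> t" using absge[OF t i(2) zi] .
      moreover have "\<bar>(y - x) \<bullet> i\<bar> \<le> norm (y - x)" using Basis_le_norm i(1) by blast
      moreover have "norm (y - x) < t" using d by (simp add: dist_norm)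
      ultimately show False by linarith
    qed
  qed (rule t)
  show "\<exists>K. compact K \<and> (\<forall>x. \<exists>v\<in>(Lt t :: 'a set). \<exists>k\<in>K. x = v + k)"
  proof -
  have "\<forall>x. \<exists>v\<in>(Lt t :: 'a set). \<exists>k\<in>cbox 0 (\<Sum>i\<in>Basis. t *\<^sub>R i). x = v + k"
  proof
    fix x :: 'a
    define v :: 'a where "v = (\<Sum>i\<in>Basis. (t * of_int (floor (x \<bullet> i / t))) *\<^sub>R i)"
    have vi: "v \<bullet> i = t * of_int (floor (x \<bullet> i / t))" if "i \<in> Basis" for i
      unfolding v_def by (rule sumB_inner[OF that, of "\<lambda>i. t * of_int (floor (x \<bullet> i / t))"])
    have "v \<in> Lt t" using vi t by (simp add: Lt_def)
    moreover have "x - v \<in> cbox 0 (\<Sum>i\<in>Basis. t *\<^sub>R i)"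
      unfolding mem_box
    proof (intro ballI conjI)
      fix i :: 'a assume i: "i \<in> Basis"
      define u where "u = x \<bullet> i / t"
      have xi: "x \<bullet> i = t * u" using t by (simp add: u_def)
      have e: "(x - v) \<bullet> i = t * (u - of_int (floor u))"
        using vi[OF i] xi by (simp add: inner_diff_left u_def[symmetric] algebra_simps)
      have "0 \<le> u - of_int (floor u)" "u - of_int (floor u) \<le> 1"
        by linarith+
      then show "0 \<bullet> i \<le> (x - v) \<bullet> i" "(x - v) \<bullet> i \<le> (\<Sum>i\<in>Basis. t *\<^sub>R i) \<bullet> i"
        using t e sumB_inner[OF i, of "\<lambda>_. t"] by (simp_all add: mult_le_cancel_left1)
    qed
    ultimately show "\<exists>v\<in>(Lt t :: 'a set). \<exists>k\<in>cbox 0 (\<Sum>i\<in>Basis. t *\<^sub>R i). x = v + k"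
      by (intro bexI[of _ v] bexI[of _ "x - v"]) simp_all
  qed
  thus ?thesis using compact_cbox by blast
  qed
qed

lemma dual_Lt:
  assumes t: "t > 0" and x: "x \<in> dual_lattice (Lt t :: 'a::euclidean_space set)"
  shows "t *\<^sub>R x \<in> Zs"
  unfolding Zs_def
proof (intro CollectI ballI)
  fix i :: 'a assume i: "i \<in> Basis"
  have "t *\<^sub>R i \<in> (Lt t :: 'a set)"
    using t i by (auto simp: Lt_def inner_Basis)
  hence "(t *\<^sub>R i) \<bullet> x \<in> \<int>" using x by (auto simp: dual_lattice_def)
  thus "(t *\<^sub>R x) \<bullet> i \<in> \<int>" by (simp add: inner_commute)
qed

theorem lemma6p1:
  fixes A :: "'a::euclidean_space set"
  assumes "countable A"
  shows "\<exists>D. is_lattice D \<and> D \<inter> span_Q A = {0} \<and> dual_lattice D \<inter> span_Q A = {0}"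
proof -
  let ?S = "span_Q A"
  have cS: "countable ?S" using countable_spanQ[OF assms] .
  define bad where "bad = (\<lambda>(z,s). (s \<bullet> z) / (z \<bullet> z)) ` ((Zs::'a set) \<times> ?S)
     \<union> (\<lambda>(s,z). (z \<bullet> s) / (s \<bullet> s)) ` (?S \<times> (Zs::'a set))"
  have cb: "countable bad" unfolding bad_def using cS countable_Zs by auto
  have "\<not> {0<..<1::real} \<subseteq> bad"
    using cb uncountable_open_interval[of 0 1] countable_subset by auto
  then obtain t0 :: real where t0: "t0 \<in> {0<..<1}" "t0 \<notin> bad" by blast
  define t where "t = t0"
  have t: "0 < t" "t \<notin> bad" using t0 by (auto simp: t_def)
  have z0: "0 \<in> ?S" by (rule zero_spanQ)
  have A1: "Lt t \<inter> ?S = {0}"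
  proof (rule ccontr)
    assume "Lt t \<inter> ?S \<noteq> {0}"
    moreover have "0 \<in> Lt t \<inter> ?S" using z0 by (simp add: Lt_def)
    ultimately obtain x where x: "x \<in> Lt t" "x \<in> ?S" "x \<noteq> 0" by blast
    define z where "z = (1/t) *\<^sub>R x"
    have "z \<in> Zs" using x(1) by (simp add: Zs_def Lt_def z_def)
    moreover have xz: "x = t *\<^sub>R z" using t by (simp add: z_def)
    have "z \<noteq> 0" using x(3) xz by auto
    hence "(x \<bullet> z) / (z \<bullet> z) = t" using xz by simp
    ultimately have "t \<in> bad" unfolding bad_def using x(2) by force
    thus False using t by blast
  qed
  have A2: "dual_lattice (Lt t) \<inter> ?S = {0}"
  proof (rule ccontr)
    assume "dual_lattice (Lt t) \<inter> ?S \<noteq> {0}"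
    moreover have "0 \<in> dual_lattice (Lt t) \<inter> ?S" using z0 by (simp add: dual_lattice_def)
    ultimately obtain x where x: "x \<in> dual_lattice (Lt t)" "x \<in> ?S" "x \<noteq> 0" by blast
    define z where "z = t *\<^sub>R x"
    have "z \<in> Zs" using dual_Lt[OF t(1) x(1)] by (simp add: z_def)
    moreover have "(z \<bullet> x) / (x \<bullet> x) = t" using x(3) by (simp add: z_def)
    ultimately have "t \<in> bad" unfolding bad_def using x(2) by force
    thus False using t by blast
  qed
  show ?thesis using Lt_lattice[OF t(1)] A1 A2 by blast
qed

end
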